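(* Let $\lambda<1$ (with $\lambda>0$), let $\delta_0$ be the solution of $\frac{\lambda}{100}=\delta_0^{\lambda^2/256}$, and suppose $\delta\le\delta_0$, $\epsilon\in(0,1)$, and $n>1/\delta$. Let $A$ be a set of $n$ arms with best arm $a^\star$, let $\alpha=\sqrt{1-\frac{\lambda}{8}}$, and sample every arm of $A$ exactly $\left(1+\frac{\lambda}{2}\right)\frac{1}{2\epsilon^2}\log\frac{1}{\delta}$ times, estimating each arm's mean by its empirical mean. If there are at most $n^{2/3}$ arms in $A$ that are $\alpha\epsilon$-close to $a^\star$, then with probability at least $1-\frac{\delta}{2}$, $a^\star$ is one of the $\frac{\lambda n}{50}$ arms of $A$ with highest empirical means.
   Context: Each arm $a$ has an unknown distribution supported on $[0,1]$ with mean $\mu(a)$; samples are independent draws. $a^\star\in\arg\max_{a\in A}\mu(a)$. An arm $a$ is $\eta$-close to $a^\star$ if $\mu(a^\star)-\mu(a)\le\eta$. $\log$ is natural; integer rounding is ignored. *)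

theory Defs
  imports "HOL-Probability.Probability"
begin

definition arm_mean :: "('a \<Rightarrow> real measure) \<Rightarrow> 'a \<Rightarrow> real" where
  "arm_mean D a = (\<integral>x. x \<partial>(D a))"

text \<open>Sampling every arm of A exactly m times: an outcome assigns to each pair (a, j),
  j < m, the j-th independent sample of arm a.\<close>
definition sample_space :: "('a \<Rightarrow> real measure) \<Rightarrow> 'a set \<Rightarrow> nat \<Rightarrow> ('a \<times> nat \<Rightarrow> real) measure" where
  "sample_space D A m = (\<Pi>\<^sub>M p \<in> A \<times> {..<m}. D (fst p))"

definition emp_mean :: "nat \<Rightarrow> ('a \<times> nat \<Rightarrow> real) \<Rightarrow> 'a \<Rightarrow> real" where
  "emp_mean m w a = (\<Sum>j<m. w (a, j)) / real m"

end

theory Submission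
  imports Defs
begin


lemma hoeff_upper:
  fixes X :: "'i \<Rightarrow> 'b \<Rightarrow> real"
  assumes M: "prob_space M" and ind: "prob_space.indep_vars M (\<lambda>_. borel) X J"
    and fin: "finite J" and ne: "J \<noteq> {}"
    and bnd: "\<And>i. i \<in> J \<Longrightarrow> AE x in M. X i x \<in> {0..1}"
    and ex: "\<And>i. i \<in> J \<Longrightarrow> prob_space.expectation M (X i) \<le> e"
    and s: "s \<ge> 0"
  shows "measure M {x\<in>space M. (\<Sum>i\<in>J. X i x) \<ge> real (card J) * e + real (card J) * s}
          \<le> exp (-2 * real (card J) * s\<^sup>2)"
proof -
  interpret prob_space M by fact
  interpret H: Hoeffding_ineq M J X "\<lambda>_. 0" "\<lambda>_. 1" "\<Sum>i\<in>J. expectation (X i)"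
    by unfold_locales (use fin ind bnd in auto)
  have c: "real (card J) > 0" using fin ne by (simp add: card_gt_0_iff)
  have mu: "(\<Sum>i\<in>J. expectation (X i)) \<le> real (card J) * e"
    using sum_mono[of J "\<lambda>i. expectation (X i)" "\<lambda>_. e", OF ex] by simp
  have "measure M {x\<in>space M. (\<Sum>i\<in>J. X i x) \<ge> real (card J) * e + real (card J) * s}
      \<le> measure M {x\<in>space M. (\<Sum>i\<in>J. X i x) \<ge> (\<Sum>i\<in>J. expectation (X i)) + real (card J) * s}"
    by (rule finite_measure_mono) (use mu in auto)
  also have "\<dots> \<le> exp (-2 * (real (card J) * s)\<^sup>2 / (\<Sum>i\<in>J. (1 - 0)\<^sup>2))"
    by (rule H.Hoeffding_ineq_ge) (use s c in auto)
  also have "(-2 * (real (card J) * s)\<^sup>2 / (\<Sum>i\<in>J. (1 - 0)\<^sup>2)) = -2 * real (card J) * s\<^sup>2"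
    using c by (simp add: power2_eq_square)
  finally show ?thesis .
qed

lemma hoeff_lower:
  fixes X :: "'i \<Rightarrow> 'b \<Rightarrow> real"
  assumes M: "prob_space M" and ind: "prob_space.indep_vars M (\<lambda>_. borel) X J"
    and fin: "finite J" and ne: "J \<noteq> {}"
    and bnd: "\<And>i. i \<in> J \<Longrightarrow> AE x in M. X i x \<in> {0..1}"
    and ex: "\<And>i. i \<in> J \<Longrightarrow> prob_space.expectation M (X i) \<ge> e"
    and s: "s \<ge> 0"
  shows "measure M {x\<in>space M. (\<Sum>i\<in>J. X i x) \<le> real (card J) * e - real (card J) * s}
          \<le> exp (-2 * real (card J) * s\<^sup>2)"
proof -
  interpret prob_space M by fact
  interpret H: Hoeffding_ineq M J X "\<lambda>_. 0" "\<lambda>_. 1" "\<Sum>i\<in>J. expectation (X i)"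
    by unfold_locales (use fin ind bnd in auto)
  have c: "real (card J) > 0" using fin ne by (simp add: card_gt_0_iff)
  have mu: "(\<Sum>i\<in>J. expectation (X i)) \<ge> real (card J) * e"
    using sum_mono[of J "\<lambda>_. e" "\<lambda>i. expectation (X i)", OF ex] by simp
  have "measure M {x\<in>space M. (\<Sum>i\<in>J. X i x) \<le> real (card J) * e - real (card J) * s}
      \<le> measure M {x\<in>space M. (\<Sum>i\<in>J. X i x) \<le> (\<Sum>i\<in>J. expectation (X i)) - real (card J) * s}"
    by (rule finite_measure_mono) (use mu in auto)
  also have "\<dots> \<le> exp (-2 * (real (card J) * s)\<^sup>2 / (\<Sum>i\<in>J. (1 - 0)\<^sup>2))"
    by (rule H.Hoeffding_ineq_le) (use s c in auto)
  also have "(-2 * (real (card J) * s)\<^sup>2 / (\<Sum>i\<in>J. (1 - 0)\<^sup>2)) = -2 * real (card J) * s\<^sup>2"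
    using c by (simp add: power2_eq_square)
  finally show ?thesis .
qed



lemma coords_indep:
  assumes P: "\<And>i. i\<in>I \<Longrightarrow> prob_space (M i)" and B: "\<And>i. i\<in>I \<Longrightarrow> sets (M i) = sets borel"
    and ne: "I \<noteq> {}"
  shows "prob_space.indep_vars (PiM I M) (\<lambda>_. borel) (\<lambda>i x. x i :: real) I"
proof -
  interpret PS: prob_space "PiM I M" by (rule prob_space_PiM) (use P in auto)
  have rv: "\<And>i. i \<in> I \<Longrightarrow> (\<lambda>x. x i) \<in> measurable (PiM I M) (M i)" by auto
  have "PS.indep_vars M (\<lambda>i x. x i) I"
  proof (subst PS.indep_vars_iff_distr_eq_PiM'[OF ne rv], assumption)
    have "distr (PiM I M) (PiM I M) (\<lambda>x. \<lambda>i\<in>I. x i) = distr (PiM I M) (PiM I M) (\<lambda>x. x)"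
      by (rule distr_cong) (auto simp: space_PiM PiE_def extensional_def restrict_def fun_eq_iff)
    also have "\<dots> = PiM I M" by simp
    also have "\<dots> = (\<Pi>\<^sub>M i\<in>I. distr (PiM I M) (M i) (\<lambda>x. x i))"
      by (rule PiM_cong) (use P in \<open>auto simp: distr_PiM_component\<close>)
    finally show "distr (PiM I M) (PiM I M) (\<lambda>x. \<lambda>i\<in>I. x i) = (\<Pi>\<^sub>M i\<in>I. distr (PiM I M) (M i) (\<lambda>x. x i))" .
  qed
  then have "PS.indep_vars (\<lambda>_. borel) (\<lambda>i x. (\<lambda>y. y) (x i)) I"
    by (rule PS.indep_vars_compose2) (use B in \<open>auto intro: measurable_ident_sets\<close>)
  then show ?thesis by simp
qed



lemma numerics:
  fixes lam \<delta>0 \<delta> \<epsilon> t :: real and n m :: nat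
  assumes lam: "0 < lam" "lam < 1"
    and delta0: "0 < \<delta>0" "lam / 100 = \<delta>0 powr (lam\<^sup>2 / 256)"
    and delta: "0 < \<delta>" "\<delta> \<le> \<delta>0"
    and eps: "0 < \<epsilon>" "\<epsilon> < 1"
    and n_big: "real n > 1 / \<delta>"
    and m: "real m \<ge> (1 + lam / 2) * (1 / (2 * \<epsilon>\<^sup>2)) * ln (1 / \<delta>)"
    and t: "t = sqrt (1 - lam / 8) - lam / 16"
  shows "exp (-2 * real m * (t * \<epsilon>)\<^sup>2) \<le> \<delta> / 4"
    and "exp (-2 * real m * (lam * \<epsilon> / 16)\<^sup>2) \<le> lam / 100"
    and "real n powr (2/3) \<le> lam * real n / 200"
    and "exp (- (lam\<^sup>2 * real n / 20000)) \<le> \<delta> / 4"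
    and "m > 0" and "t > 0"
proof -
  define K where "K = ln (100 / lam)"
  define L where "L = ln (1 / \<delta>)"
  have ln100: "ln (100::real) \<ge> 1"
    using exp_le ln_ge_iff[of 100 1] by simp
  have K1: "K \<ge> 1"
  proof -
    have "ln (100::real) \<le> ln (100 / lam)" using lam by (simp add: field_simps)
    then show ?thesis using ln100 K_def by simp
  qed
  have "ln (lam / 100) = (lam\<^sup>2 / 256) * ln \<delta>0"
    unfolding delta0(2) using delta0(1) by (simp add: ln_powr)
  moreover have "ln (lam / 100) = - K" unfolding K_def using lam by (simp add: ln_div)
  ultimately have lnd0: "ln \<delta>0 = - 256 * K / lam\<^sup>2" using lam by (simp add: field_simps)
  have "L = - ln \<delta>" unfolding L_def using delta by (simp add: ln_div)
  moreover have "ln \<delta> \<le> ln \<delta>0" using delta by simp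
  ultimately have LK: "L \<ge> 256 * K / lam\<^sup>2" using lnd0 by simp
  have l2: "lam\<^sup>2 \<le> lam" "lam\<^sup>2 > 0" using lam by (auto simp: power2_eq_square)
  have LK3: "lam\<^sup>2 * L \<ge> 256 * K" using LK l2 by (simp add: field_simps)
  have Lpos: "L > 0" proof -
    have "256 * K / lam\<^sup>2 > 0" using K1 l2 by simp
    then show ?thesis using LK by linarith
  qed
  have "lam * L \<ge> lam\<^sup>2 * L" using l2 Lpos by (intro mult_right_mono) auto
  moreover have "L \<ge> lam * L" using lam Lpos by (simp add: mult_left_le_one_le)
  ultimately have LK2: "L \<ge> 256 * K" "lam * L \<ge> 256 * K" using LK3 by auto
  have m2: "2 * real m * \<epsilon>\<^sup>2 \<ge> (1 + lam / 2) * L"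
    using m eps unfolding L_def by (simp add: field_simps)
  show "m > 0"
  proof (rule ccontr)
    assume "\<not> m > 0" then have "m = 0" by simp
    moreover have "(1 + lam / 2) * L > 0" using Lpos lam by simp
    ultimately show False using m2 by simp
  qed
  define \<alpha> where "\<alpha> = sqrt (1 - lam / 8)"
  have a1: "\<alpha> \<le> 1" "\<alpha>\<^sup>2 = 1 - lam / 8" "\<alpha> \<ge> 0" using lam unfolding \<alpha>_def by auto
  have "\<alpha>\<^sup>2 \<ge> 7/8" using a1 lam by simp
  then have "(1/2)\<^sup>2 \<le> \<alpha>\<^sup>2" by (simp add: power2_eq_square)
  then have "\<alpha> \<ge> 1/2" using a1(3) by (rule power2_le_imp_le)
  then show tpos: "t > 0" using t lam \<alpha>_def by simp
  have t2: "t\<^sup>2 \<ge> 1 - lam / 4"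
  proof -
    have ta: "t = \<alpha> - lam / 16" using t \<alpha>_def by simp
    have "t\<^sup>2 = \<alpha>\<^sup>2 - lam * \<alpha> / 8 + lam\<^sup>2 / 256" unfolding ta by (simp add: power2_eq_square algebra_simps)
    moreover have "lam * \<alpha> \<le> lam" using a1 lam by (simp add: mult_left_le)
    ultimately show ?thesis using a1 l2 by linarith
  qed
  have t3: "(1 + lam/2) * t\<^sup>2 \<ge> 1 + lam / 8"
  proof -
    have "(1 + lam/2) * t\<^sup>2 \<ge> (1 + lam/2) * (1 - lam/4)" using t2 lam by (intro mult_left_mono) auto
    moreover have "(1 + lam/2) * (1 - lam/4) = 1 + lam/4 - lam\<^sup>2/8" by (simp add: power2_eq_square algebra_simps)
    ultimately show ?thesis using l2 by simp
  qed
  have expL: "exp (- L) = \<delta>" unfolding L_def using delta by (simp add: ln_div)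
  have ln4: "ln (4::real) \<le> 2"
  proof -
    have "exp (2::real) \<ge> 1 + 2 + 2\<^sup>2/2" by (rule exp_lower_Taylor_quadratic) simp
    then have "(4::real) \<le> exp 2" by simp
    then have "ln (4::real) \<le> ln (exp 2)" by (subst ln_le_cancel_iff) auto
    then show ?thesis by simp
  qed
  show "exp (-2 * real m * (t * \<epsilon>)\<^sup>2) \<le> \<delta> / 4"
  proof -
    have "2 * real m * (t * \<epsilon>)\<^sup>2 = t\<^sup>2 * (2 * real m * \<epsilon>\<^sup>2)" by (simp add: power_mult_distrib)
    also have "\<dots> \<ge> t\<^sup>2 * ((1 + lam / 2) * L)" using m2 by (intro mult_left_mono) auto
    also have "t\<^sup>2 * ((1 + lam / 2) * L) = ((1 + lam/2) * t\<^sup>2) * L" by (simp add: algebra_simps)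
    also have "\<dots> \<ge> (1 + lam/8) * L" using t3 Lpos by (intro mult_right_mono) auto
    finally have "2 * real m * (t * \<epsilon>)\<^sup>2 \<ge> (1 + lam/8) * L" .
    moreover have "lam * L / 8 \<ge> ln 4" using LK2 K1 ln4 by simp
    ultimately have "-2 * real m * (t * \<epsilon>)\<^sup>2 \<le> - L - ln 4" by (simp add: algebra_simps)
    then have "exp (-2 * real m * (t * \<epsilon>)\<^sup>2) \<le> exp (- L - ln 4)" by simp
    also have "\<dots> = \<delta> / 4" using expL by (simp add: exp_diff)
    finally show ?thesis .
  qed
  show "exp (-2 * real m * (lam * \<epsilon> / 16)\<^sup>2) \<le> lam / 100"
  proof -
    have "2 * real m * (lam * \<epsilon> / 16)\<^sup>2 = lam\<^sup>2 / 256 * (2 * real m * \<epsilon>\<^sup>2)" by (simp add: power_mult_distrib power_divide)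
    also have "\<dots> \<ge> lam\<^sup>2 / 256 * ((1 + lam / 2) * L)" using m2 by (intro mult_left_mono) auto
    also have "lam\<^sup>2 / 256 * ((1 + lam / 2) * L) = lam\<^sup>2 * L / 256 + lam\<^sup>2 * L * lam / 512" by (simp add: algebra_simps)
    also have "\<dots> \<ge> lam\<^sup>2 * L / 256" using l2 Lpos lam by simp
    finally have "2 * real m * (lam * \<epsilon> / 16)\<^sup>2 \<ge> K" using LK3 by simp
    then have "exp (-2 * real m * (lam * \<epsilon> / 16)\<^sup>2) \<le> exp (-K)" by simp
    also have "exp (-K) = lam / 100" unfolding K_def using lam by (simp add: exp_minus)
    finally show ?thesis .
  qed
  have npos: "real n > 0" proof -
    have "1 / \<delta> > 0" using delta by simp
    then show ?thesis using n_big by linarith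
  qed
  have lnn: "ln (real n) > L"
  proof -
    have "ln (1/\<delta>) < ln (real n)" using n_big delta npos by (subst ln_less_cancel_iff) auto
    then show ?thesis unfolding L_def .
  qed
  have n13: "real n powr (1/3) \<ge> 200 / lam"
  proof -
    have "ln (200 / lam) = ln 2 + K" unfolding K_def using lam by (simp add: ln_div ln_mult[symmetric]) (metis ln_mult_pos mult_2 numeral_Bit0 zero_less_numeral times_divide_eq_left)
    also have "\<dots> \<le> L / 3" using LK2 K1 ln_2_less_1 by linarith
    also have "\<dots> \<le> ln (real n powr (1/3))" using lnn npos by (simp add: ln_powr)
    finally have "ln (200 / lam) \<le> ln (real n powr (1/3))" .
    then show ?thesis using npos lam by (subst (asm) ln_le_cancel_iff) auto
  qed
  show "real n powr (2/3) \<le> lam * real n / 200"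
  proof -
    have "real n powr (2/3) * real n powr (1/3) = real n" using npos by (simp add: powr_add[symmetric])
    then have e: "real n powr (2/3) = real n / real n powr (1/3)" using npos by (simp add: field_simps)
    have "real n / real n powr (1/3) \<le> real n / (200 / lam)" using n13 lam npos by (intro divide_left_mono) auto
    then show ?thesis using e by (simp add: mult.commute)
  qed
  show "exp (- (lam\<^sup>2 * real n / 20000)) \<le> \<delta> / 4"
  proof -
    define y where "y = L - 2 * K"
    have y1: "L \<le> 2 * y" "y \<ge> 8" using LK2 K1 unfolding y_def by auto
    have "exp y \<ge> 1 + y + y\<^sup>2 / 2" using exp_lower_Taylor_quadratic[of y] y1 by simp
    moreover have "y\<^sup>2 \<ge> 8 * y" using y1 by (simp add: power2_eq_square)
    ultimately have ey: "exp y \<ge> 4 + 4 * y" using y1 by simp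
    have lamK: "lam = 100 * exp (- K)" unfolding K_def using lam by (simp add: exp_minus)
    have "real n \<ge> exp L" proof -
    have "exp L < exp (ln (real n))" using lnn by simp
    then show ?thesis using npos by simp
  qed
    then have "lam\<^sup>2 * real n \<ge> 10000 * exp (-2*K) * exp L"
      using lamK by (simp add: power2_eq_square exp_add[symmetric] mult_left_mono)
    also have "10000 * exp (-2*K) * exp L = 10000 * exp y" unfolding y_def by (simp add: exp_add[symmetric])
    finally have "lam\<^sup>2 * real n / 20000 \<ge> exp y / 2" by simp
    then have "lam\<^sup>2 * real n / 20000 \<ge> L + ln 4" using ey y1 ln4 by simp
    then have "exp (- (lam\<^sup>2 * real n / 20000)) \<le> exp (- L - ln 4)" by simp
    also have "\<dots> = \<delta> / 4" using expL by (simp add: exp_diff)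
    finally show ?thesis .
  qed
qed


lemma block_indep:
  assumes Q: "prob_space Q" and CI: "prob_space.indep_vars Q (\<lambda>_. borel) (\<lambda>p x. x p) I"
    and K: "\<And>j. j \<in> L \<Longrightarrow> K j \<subseteq> I" and disj: "disjoint_family_on K L"
    and g: "\<And>j. j \<in> L \<Longrightarrow> g j \<in> borel_measurable (PiM (K j) (\<lambda>_. borel))"
    and f: "\<And>j. j \<in> L \<Longrightarrow> f j = (\<lambda>x. g j (restrict x (K j)))"
  shows "prob_space.indep_vars Q (\<lambda>_. borel) f L"
proof -
  interpret prob_space Q by fact
  have "indep_vars (\<lambda>j. PiM (K j) (\<lambda>_. borel)) (\<lambda>j \<omega>. restrict (\<lambda>i. \<omega> i) (K j)) L"
    by (rule indep_vars_restrict[OF CI K disj])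
  then have "indep_vars (\<lambda>_. borel) (\<lambda>j x. g j (restrict (\<lambda>i. x i) (K j))) L"
    by (rule indep_vars_compose2) (use g in auto)
  then show ?thesis
    by (subst indep_vars_cong[where Y="\<lambda>j x. g j (restrict (\<lambda>i. x i) (K j))" and N'="\<lambda>_. borel"]) (use f in auto)
qed

lemma card_sum_if:
  assumes "finite A"
  shows "real (card {a\<in>A. P a}) = (\<Sum>a\<in>A. if P a then 1 else 0)"
proof -
  have "real (card {a\<in>A. P a}) = (\<Sum>a\<in>{a\<in>A. P a}. 1)" by simp
  also have "\<dots> = (\<Sum>a\<in>A. if P a then 1 else 0)" using assms by (rule sum.inter_filter)
  finally show ?thesis .
qed

theorem lemma3:
  fixes D :: "'a \<Rightarrow> real measure" and A :: "'a set" and astar :: 'a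
    and lam \<delta>0 \<delta> \<epsilon> :: real and n m :: nat
  assumes lam: "0 < lam" "lam < 1"
    and delta0: "0 < \<delta>0" "lam / 100 = \<delta>0 powr (lam\<^sup>2 / 256)"
    and delta: "0 < \<delta>" "\<delta> \<le> \<delta>0"
    and eps: "0 < \<epsilon>" "\<epsilon> < 1"
    and finA: "finite A" and cardA: "card A = n" and n_big: "real n > 1 / \<delta>"
    and dist: "\<And>a. a \<in> A \<Longrightarrow> prob_space (D a)"
    and borel: "\<And>a. a \<in> A \<Longrightarrow> sets (D a) = sets borel"
    and support: "\<And>a. a \<in> A \<Longrightarrow> (AE x in D a. 0 \<le> x \<and> x \<le> 1)"
    and best: "astar \<in> A" "\<And>a. a \<in> A \<Longrightarrow> arm_mean D a \<le> arm_mean D astar"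
    and m_def: "m = nat \<lceil>(1 + lam / 2) * (1 / (2 * \<epsilon>\<^sup>2)) * ln (1 / \<delta>)\<rceil>"
    and few_close: "real (card {a \<in> A. arm_mean D astar - arm_mean D a \<le> sqrt (1 - lam / 8) * \<epsilon>})
                      \<le> real n powr (2 / 3)"
  shows "measure (sample_space D A m)
           {w \<in> space (sample_space D A m).
              real (card {a \<in> A. emp_mean m w a \<ge> emp_mean m w astar}) \<le> lam * real n / 50}
         \<ge> 1 - \<delta> / 2"
proof -
  define t where "t = sqrt (1 - lam / 8) - lam / 16"
  have mge: "real m \<ge> (1 + lam / 2) * (1 / (2 * \<epsilon>\<^sup>2)) * ln (1 / \<delta>)"
    unfolding m_def by (rule real_nat_ceiling_ge)
  note NUM = numerics[OF lam delta0 delta eps n_big mge t_def]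
  have mpos: "m > 0" and tpos: "t > 0" using NUM by auto
  define I where "I = A \<times> {..<m}"
  define P where "P = sample_space D A m"
  have P_eq: "P = PiM I (\<lambda>p. D (fst p))" by (simp add: P_def sample_space_def I_def)
  have distI: "\<And>p. p \<in> I \<Longrightarrow> prob_space (D (fst p))" using dist by (auto simp: I_def)
  interpret prob_space P unfolding P_eq by (rule prob_space_PiM) (use distI in auto)
  have Ine: "I \<noteq> {}" using best(1) mpos by (auto simp: I_def)
  have CI: "indep_vars (\<lambda>_. borel) (\<lambda>p x. x p) I"
    unfolding P_eq by (rule coords_indep) (use distI borel Ine in \<open>auto simp: I_def\<close>)
  have coord: "(\<lambda>x. x p) \<in> borel_measurable P" if "p \<in> I" for p
  proof -
    have "(\<lambda>x. x p) \<in> measurable P (D (fst p))" unfolding P_eq using that by auto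
    moreover have "(\<lambda>x. x) \<in> measurable (D (fst p)) borel"
      by (rule measurable_ident_sets) (use that borel in \<open>auto simp: I_def\<close>)
    ultimately show ?thesis by (rule measurable_compose)
  qed
  have AEc: "AE x in P. x p \<in> {0..1}" if "p \<in> I" for p
    unfolding P_eq by (rule AE_PiM_component) (use distI that support in \<open>auto simp: I_def\<close>)
  have Ec: "expectation (\<lambda>x. x p) = arm_mean D (fst p)" if "p \<in> I" for p
  proof -
    have "(\<lambda>x. x p) \<in> measurable P (D (fst p))" unfolding P_eq using that by auto
    moreover have "(\<lambda>x. x) \<in> borel_measurable (D (fst p))"
      by (rule measurable_ident_sets) (use that borel in \<open>auto simp: I_def\<close>)
    ultimately have "integral\<^sup>L (distr P (D (fst p)) (\<lambda>x. x p)) (\<lambda>x. x) = expectation (\<lambda>x. x p)"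
      by (rule integral_distr)
    moreover have "distr P (D (fst p)) (\<lambda>x. x p) = D (fst p)"
      unfolding P_eq by (rule distr_PiM_component) (use distI that in auto)
    ultimately show ?thesis by (simp add: arm_mean_def)
  qed
  have arm_indep: "indep_vars (\<lambda>_. borel) (\<lambda>j x. x (a, j)) {..<m}" if a: "a \<in> A" for a
    by (rule block_indep[where K="\<lambda>j. {(a,j)}" and g="\<lambda>j r. r (a,j)", OF prob_space_axioms CI])
       (use a in \<open>auto simp: I_def disjoint_family_on_def\<close>)
  have arm_up: "prob {x\<in>space P. (\<Sum>j\<in>{..<m}. x (a, j)) \<ge> real m * arm_mean D a + real m * s}
      \<le> exp (-2 * real m * s\<^sup>2)" if a: "a \<in> A" and s: "s \<ge> 0" for a s
    using hoeff_upper[OF prob_space_axioms arm_indep[OF a], of "arm_mean D a" s] a s mpos AEc Ec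
    by (auto simp: I_def)
  have arm_low: "prob {x\<in>space P. (\<Sum>j\<in>{..<m}. x (a, j)) \<le> real m * arm_mean D a - real m * s}
      \<le> exp (-2 * real m * s\<^sup>2)" if a: "a \<in> A" and s: "s \<ge> 0" for a s
    using hoeff_lower[OF prob_space_axioms arm_indep[OF a], of "arm_mean D a" s] a s mpos AEc Ec
    by (auto simp: I_def)
  have emp_meas: "(\<lambda>x. emp_mean m x a) \<in> borel_measurable P" if a: "a \<in> A" for a
    unfolding emp_mean_def
    by (intro borel_measurable_divide borel_measurable_sum coord) (use a in \<open>auto simp: I_def\<close>)

  define \<alpha> where "\<alpha> = sqrt (1 - lam / 8)"
  define \<mu> where "\<mu> = arm_mean D"
  define \<theta> where "\<theta> = \<mu> astar - t * \<epsilon>"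
  define C where "C = {a \<in> A. \<mu> astar - \<mu> a \<le> \<alpha> * \<epsilon>}"
  define F where "F = A - C"
  define X where "X = (\<lambda>(a::'a) (x::'a \<times> nat \<Rightarrow> real). if \<theta> \<le> emp_mean m x a then 1 else 0 :: real)"
  have FA: "F \<subseteq> A" and finF: "finite F" using finA by (auto simp: F_def)
  have cardF: "real (card F) \<le> real n" using card_mono[OF finA FA] cardA by simp
  have far_prob: "prob {x\<in>space P. \<theta> \<le> emp_mean m x a} \<le> lam / 100" if a: "a \<in> F" for a
  proof -
    have aA: "a \<in> A" using a FA by auto
    have gap: "\<theta> \<ge> \<mu> a + lam * \<epsilon> / 16"
    proof -
      have "\<mu> astar - \<mu> a > \<alpha> * \<epsilon>" using a unfolding F_def C_def by auto
      moreover have ta: "\<alpha> = t + lam / 16" unfolding t_def \<alpha>_def by simp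
      then have "\<alpha> * \<epsilon> = t * \<epsilon> + lam * \<epsilon> / 16" unfolding ta by (simp add: algebra_simps)
      ultimately show ?thesis unfolding \<theta>_def by linarith
    qed
    have "prob {x\<in>space P. \<theta> \<le> emp_mean m x a}
        \<le> prob {x\<in>space P. (\<Sum>j\<in>{..<m}. x (a, j)) \<ge> real m * arm_mean D a + real m * (lam * \<epsilon> / 16)}"
    proof (rule finite_measure_mono)
      show "{x\<in>space P. \<theta> \<le> emp_mean m x a}
        \<subseteq> {x\<in>space P. (\<Sum>j\<in>{..<m}. x (a, j)) \<ge> real m * arm_mean D a + real m * (lam * \<epsilon> / 16)}"
      proof safe
        fix x assume "x \<in> space P" "\<theta> \<le> emp_mean m x a"
        then have "real m * \<theta> \<le> (\<Sum>j\<in>{..<m}. x (a, j))" using mpos by (simp add: emp_mean_def field_simps)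
        moreover have "real m * \<theta> \<ge> real m * (\<mu> a + lam * \<epsilon> / 16)" using gap by (intro mult_left_mono) auto
        ultimately show "real m * arm_mean D a + real m * (lam * \<epsilon> / 16) \<le> (\<Sum>j\<in>{..<m}. x (a, j))"
          by (simp add: \<mu>_def algebra_simps)
      qed
      show "{x\<in>space P. (\<Sum>j\<in>{..<m}. x (a, j)) \<ge> real m * arm_mean D a + real m * (lam * \<epsilon> / 16)} \<in> events"
        by (intro borel_measurable_le borel_measurable_sum borel_measurable_const coord) (use aA in \<open>auto simp: I_def\<close>)
    qed
    also have "\<dots> \<le> exp (-2 * real m * (lam * \<epsilon> / 16)\<^sup>2)" by (rule arm_up) (use aA lam eps in auto)
    also have "\<dots> \<le> lam / 100" using NUM by simp
    finally show ?thesis .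
  qed
  have Xmeas: "X a \<in> borel_measurable P" if "a \<in> A" for a
    unfolding X_def by (intro measurable_If borel_measurable_const borel_measurable_le emp_meas that)
  have EX: "expectation (X a) \<le> lam / 100" if a: "a \<in> F" for a
  proof -
    have aA: "a \<in> A" using a FA by auto
    have ev: "{x\<in>space P. \<theta> \<le> emp_mean m x a} \<in> events"
      by (intro borel_measurable_le borel_measurable_const emp_meas aA)
    have "expectation (X a) = expectation (indicator {x\<in>space P. \<theta> \<le> emp_mean m x a})"
      by (rule Bochner_Integration.integral_cong) (auto simp: X_def indicator_def)
    also have "\<dots> = prob {x\<in>space P. \<theta> \<le> emp_mean m x a}"
      using ev by (simp add: emeasure_eq_measure)
    finally show ?thesis using far_prob[OF a] by simp
  qed
  have X_indep: "indep_vars (\<lambda>_. borel) X F"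
  proof (rule block_indep[where K="\<lambda>a. {a} \<times> {..<m}"
        and g="\<lambda>a r. if \<theta> \<le> (\<Sum>j<m. r (a, j)) / real m then 1 else 0", OF prob_space_axioms CI])
    show "\<And>j. j \<in> F \<Longrightarrow> {j} \<times> {..<m} \<subseteq> I" using FA by (auto simp: I_def)
    show "disjoint_family_on (\<lambda>a. {a} \<times> {..<m}) F" by (auto simp: disjoint_family_on_def)
    fix a assume a: "a \<in> F"
    have h: "(\<lambda>r. (\<Sum>j<m. r (a, j)) / real m) \<in> borel_measurable (PiM ({a} \<times> {..<m}) (\<lambda>_. borel))"
      by (intro borel_measurable_divide borel_measurable_sum borel_measurable_const measurable_component_singleton) auto
    show "(\<lambda>r. if \<theta> \<le> (\<Sum>j<m. r (a, j)) / real m then 1 else 0) \<in> borel_measurable (PiM ({a} \<times> {..<m}) (\<lambda>_. borel))"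
      by (intro measurable_If borel_measurable_const borel_measurable_le h)
    show "X a = (\<lambda>x. if \<theta> \<le> (\<Sum>j<m. restrict x ({a} \<times> {..<m}) (a, j)) / real m then 1 else 0)"
    proof
      fix x :: "'a \<times> nat \<Rightarrow> real"
      have "(\<Sum>j<m. restrict x ({a} \<times> {..<m}) (a, j)) = (\<Sum>j<m. x (a, j))" by (rule sum.cong) auto
      then show "X a x = (if \<theta> \<le> (\<Sum>j<m. restrict x ({a} \<times> {..<m}) (a, j)) / real m then 1 else 0)"
        unfolding X_def emp_mean_def by simp
    qed
  qed

  have npos: "real n > 0" using n_big delta by (smt (verit) divide_pos_pos)
  define B1 where "B1 = {x\<in>space P. (\<Sum>j\<in>{..<m}. x (astar, j)) \<le> real m * arm_mean D astar - real m * (t * \<epsilon>)}"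
  define B2 where "B2 = {x\<in>space P. real (card F) * (lam / 100) + lam * real n / 200 \<le> (\<Sum>a\<in>F. X a x)}"
  have B1ev: "B1 \<in> events" unfolding B1_def
    by (intro borel_measurable_le borel_measurable_sum borel_measurable_const borel_measurable_diff coord) (use best(1) in \<open>auto simp: I_def\<close>)
  have B2ev: "B2 \<in> events" unfolding B2_def
    by (intro borel_measurable_le borel_measurable_sum borel_measurable_const Xmeas) (use FA in auto)
  have pB1: "prob B1 \<le> \<delta> / 4"
  proof -
    have "prob B1 \<le> exp (-2 * real m * (t * \<epsilon>)\<^sup>2)" unfolding B1_def
      by (rule arm_low) (use best(1) tpos eps in auto)
    also have "\<dots> \<le> \<delta> / 4" using NUM by simp
    finally show ?thesis .
  qed
  have pB2: "prob B2 \<le> \<delta> / 4"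
  proof (cases "F = {}")
    case True
    have "lam * real n > 0" using npos lam by simp
    then have "B2 = {}" unfolding B2_def using True by auto
    then show ?thesis using delta by simp
  next
    case False
    have cF: "real (card F) > 0" using False finF by (simp add: card_gt_0_iff)
    define s where "s = lam * real n / (200 * real (card F))"
    have s0: "s \<ge> 0" unfolding s_def using lam npos cF by simp
    have cs: "real (card F) * s = lam * real n / 200" unfolding s_def using cF by simp
    have "prob B2 \<le> exp (-2 * real (card F) * s\<^sup>2)"
      unfolding B2_def cs[symmetric]
      by (rule hoeff_upper[OF prob_space_axioms X_indep finF False _ EX s0]) (auto simp: X_def)
    also have "\<dots> \<le> exp (- (lam\<^sup>2 * real n / 20000))"
    proof -
      have "2 * real (card F) * s\<^sup>2 = (lam * real n)\<^sup>2 / (20000 * real (card F))"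
        unfolding s_def using cF by (simp add: power2_eq_square field_simps)
      also have "\<dots> \<ge> (lam * real n)\<^sup>2 / (20000 * real n)"
        using cF cardF by (intro divide_left_mono) auto
      also have "(lam * real n)\<^sup>2 / (20000 * real n) = lam\<^sup>2 * real n / 20000"
        using npos by (simp add: power2_eq_square field_simps)
      finally show ?thesis by simp
    qed
    also have "\<dots> \<le> \<delta> / 4" using NUM by simp
    finally show ?thesis .
  qed
  define S where "S = {w \<in> space P. real (card {a \<in> A. emp_mean m w a \<ge> emp_mean m w astar}) \<le> lam * real n / 50}"
  have S_eq: "S = {w \<in> space P. (\<Sum>a\<in>A. if emp_mean m w a \<ge> emp_mean m w astar then 1 else 0) \<le> lam * real n / 50}"
    unfolding S_def using card_sum_if[OF finA] by simp
  have Sev: "S \<in> events" unfolding S_eq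
    by (intro borel_measurable_le borel_measurable_sum borel_measurable_const measurable_If emp_meas best(1)) auto
  have incl: "space P - S \<subseteq> B1 \<union> B2"
  proof
    fix x assume x: "x \<in> space P - S"
    show "x \<in> B1 \<union> B2"
    proof (rule ccontr)
      assume "x \<notin> B1 \<union> B2"
      then have n1: "x \<notin> B1" and n2: "x \<notin> B2" by auto
      have xs: "x \<in> space P" using x by auto
      have "(\<Sum>j\<in>{..<m}. x (astar, j)) > real m * \<theta>"
        using n1 xs unfolding B1_def \<theta>_def \<mu>_def by (simp add: algebra_simps)
      then have th: "emp_mean m x astar > \<theta>" using mpos by (simp add: emp_mean_def field_simps)
      have sub: "{a \<in> A. emp_mean m x a \<ge> emp_mean m x astar} \<subseteq> C \<union> {a\<in>F. \<theta> \<le> emp_mean m x a}"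
        using th by (auto simp: F_def)
      have "card {a \<in> A. emp_mean m x a \<ge> emp_mean m x astar} \<le> card (C \<union> {a\<in>F. \<theta> \<le> emp_mean m x a})"
        by (rule card_mono[OF _ sub]) (use finA in \<open>auto simp: C_def F_def\<close>)
      also have "\<dots> \<le> card C + card {a\<in>F. \<theta> \<le> emp_mean m x a}" by (rule card_Un_le)
      finally have c1: "real (card {a \<in> A. emp_mean m x a \<ge> emp_mean m x astar})
          \<le> real (card C) + real (card {a\<in>F. \<theta> \<le> emp_mean m x a})" by linarith
      have c2: "real (card {a\<in>F. \<theta> \<le> emp_mean m x a}) = (\<Sum>a\<in>F. X a x)"
        unfolding X_def by (rule card_sum_if[OF finF])
      have c3: "(\<Sum>a\<in>F. X a x) < real (card F) * (lam / 100) + lam * real n / 200"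
        using n2 xs unfolding B2_def by auto
      have c4: "real (card F) * (lam / 100) \<le> real n * (lam / 100)" using cardF lam by (intro mult_right_mono) auto
      have c6: "real n * (lam / 100) = lam * real n / 100" by simp
      have c5: "real (card C) \<le> lam * real n / 200"
        using few_close NUM unfolding C_def \<mu>_def \<alpha>_def by linarith
      have "real (card {a \<in> A. emp_mean m x a \<ge> emp_mean m x astar}) \<le> lam * real n / 50"
        using c1 c2 c3 c4 c5 c6 by linarith
      then have "x \<in> S" using xs unfolding S_def by simp
      then show False using x by simp
    qed
  qed
  have e1: "prob S = 1 - prob (space P - S)" using prob_compl[OF Sev] by simp
  have e2: "prob (space P - S) \<le> prob (B1 \<union> B2)"
    by (rule finite_measure_mono[OF incl]) (use B1ev B2ev in auto)
  have e3: "prob (B1 \<union> B2) \<le> prob B1 + prob B2" by (rule measure_subadditive) (use B1ev B2ev in auto)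
  have "prob S \<ge> 1 - \<delta> / 2" using e1 e2 e3 pB1 pB2 by linarith
  then show ?thesis unfolding S_def P_def .
qed

end
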